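(* For every outcome of the random choices of Algorithm 1 and every $k\in\{0,\dots,T-1\}$, $f_\mu(x_{k+1})\le f_\mu(x_k)$; moreover for every $k\in\{0,\dots,T\}$, $f_\mu(x_k)\le 0$, $Ax_k\le(1+\epsilon)\mathbf 1$ and $\mathbf 1^Tx_k\le(1+\epsilon)\mathrm{OPT}$.
   Context: Standing setup: $A\in\mathbb{R}^{m\times n}_{\ge 0}$ has no zero column and is normalized so that $\min_{i\in[n]}\|A_{:i}\|_\infty=1$, where $A_{:i}$ denotes the $i$-th column. The packing LP is $\max\{\mathbf 1^Tx: x\ge 0,\ Ax\le \mathbf 1\}$ with optimal value $\mathrm{OPT}$. $\epsilon\in(0,1/2]$. $\log$ is the natural logarithm unless written $\log_2$. $\mu=\frac{\epsilon}{4\log(nm/\epsilon)}$, $p_j(x)=\exp\big(\frac{1}{\mu}((Ax)_j-1)\big)$, and $f_\mu(x)=-\mathbf 1^Tx+\mu\sum_{j=1}^m p_j(x)$; $\nabla_i f_\mu(x)=-1+\sum_j A_{ji}p_j(x)$. Algorithm 1 (with any number $T$ of iterations): set $\alpha=\mu/20$, $w=\lceil\log_2(1/\epsilon)\rceil$, $x_0[i]=\frac{1-\epsilon/2}{n\|A_{:i}\|_\infty}$. For $k=0,\dots,T-1$: choose $t_k\in\{0,\dots,w-1\}$ uniformly at random; writing $g_i=\nabla_i f_\mu(x_k)$, define $\xi_k[i]=0$ if $|g_i|\le\epsilon$, $\xi_k[i]=g_i$ if $\epsilon<|g_i|\le 1$, $\xi_k[i]=1$ if $g_i>1$; $\xi^{(t)}_k[i]=\xi_k[i]$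 if $\epsilon2^t<|\xi_k[i]|\le\epsilon2^{t+1}$ and $0$ otherwise; $x_{k+1}[i]=x_k[i]\exp(-\alpha\,\xi^{(t_k)}_k[i])$. *)

theory Defs
  imports Complex_Main
begin

text \<open>Matrices A are represented as functions nat => nat => real with
  row index j < m and column index i < n; vectors x as nat => real with index i < n.\<close>

definition Ax :: "(nat \<Rightarrow> nat \<Rightarrow> real) \<Rightarrow> nat \<Rightarrow> (nat \<Rightarrow> real) \<Rightarrow> nat \<Rightarrow> real" where
  "Ax A n x j = (\<Sum>i<n. A j i * x i)"

definition colnorm :: "(nat \<Rightarrow> nat \<Rightarrow> real) \<Rightarrow> nat \<Rightarrow> nat \<Rightarrow> real" where
  "colnorm A m i = Max {\<bar>A j i\<bar> | j. j < m}"

definition feasible :: "(nat \<Rightarrow> nat \<Rightarrow> real) \<Rightarrow> nat \<Rightarrow> nat \<Rightarrow> (nat \<Rightarrow> real) \<Rightarrow> bool" where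
  "feasible A m n x \<longleftrightarrow> (\<forall>i<n. 0 \<le> x i) \<and> (\<forall>j<m. Ax A n x j \<le> 1)"

definition OPT :: "(nat \<Rightarrow> nat \<Rightarrow> real) \<Rightarrow> nat \<Rightarrow> nat \<Rightarrow> real" where
  "OPT A m n = Sup {(\<Sum>i<n. x i) | x. feasible A m n x}"

definition mu :: "nat \<Rightarrow> nat \<Rightarrow> real \<Rightarrow> real" where
  "mu m n eps = eps / (4 * ln (real n * real m / eps))"

definition pj :: "(nat \<Rightarrow> nat \<Rightarrow> real) \<Rightarrow> nat \<Rightarrow> nat \<Rightarrow> real \<Rightarrow> (nat \<Rightarrow> real) \<Rightarrow> nat \<Rightarrow> real" where
  "pj A m n eps x j = exp ((1 / mu m n eps) * (Ax A n x j - 1))"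

definition fmu :: "(nat \<Rightarrow> nat \<Rightarrow> real) \<Rightarrow> nat \<Rightarrow> nat \<Rightarrow> real \<Rightarrow> (nat \<Rightarrow> real) \<Rightarrow> real" where
  "fmu A m n eps x = - (\<Sum>i<n. x i) + mu m n eps * (\<Sum>j<m. pj A m n eps x j)"

definition gradf :: "(nat \<Rightarrow> nat \<Rightarrow> real) \<Rightarrow> nat \<Rightarrow> nat \<Rightarrow> real \<Rightarrow> (nat \<Rightarrow> real) \<Rightarrow> nat \<Rightarrow> real" where
  "gradf A m n eps x i = -1 + (\<Sum>j<m. A j i * pj A m n eps x j)"

definition alpha :: "nat \<Rightarrow> nat \<Rightarrow> real \<Rightarrow> real" where
  "alpha m n eps = mu m n eps / 20"

definition wbuckets :: "real \<Rightarrow> nat" where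
  "wbuckets eps = nat \<lceil>log 2 (1 / eps)\<rceil>"

definition xi :: "(nat \<Rightarrow> nat \<Rightarrow> real) \<Rightarrow> nat \<Rightarrow> nat \<Rightarrow> real \<Rightarrow> (nat \<Rightarrow> real) \<Rightarrow> nat \<Rightarrow> real" where
  "xi A m n eps x i = (let g = gradf A m n eps x i in
     if \<bar>g\<bar> \<le> eps then 0 else if \<bar>g\<bar> \<le> 1 then g else if g > 1 then 1 else g)"
text \<open>(the case g < -1 cannot occur since g >= -1; we keep g there)\<close>

definition xi_t :: "(nat \<Rightarrow> nat \<Rightarrow> real) \<Rightarrow> nat \<Rightarrow> nat \<Rightarrow> real \<Rightarrow> nat \<Rightarrow> (nat \<Rightarrow> real) \<Rightarrow> nat \<Rightarrow> real" where
  "xi_t A m n eps t x i = (let v = xi A m n eps x i in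
     if eps * 2 ^ t < \<bar>v\<bar> \<and> \<bar>v\<bar> \<le> eps * 2 ^ (t + 1) then v else 0)"

definition x_init :: "(nat \<Rightarrow> nat \<Rightarrow> real) \<Rightarrow> nat \<Rightarrow> nat \<Rightarrow> real \<Rightarrow> nat \<Rightarrow> real" where
  "x_init A m n eps i = (1 - eps / 2) / (real n * colnorm A m i)"

text \<open>iterates x_k of Algorithm 1 for a given outcome ts of the random choices t_0, t_1, ...\<close>
primrec alg_iter :: "(nat \<Rightarrow> nat \<Rightarrow> real) \<Rightarrow> nat \<Rightarrow> nat \<Rightarrow> real \<Rightarrow> (nat \<Rightarrow> nat) \<Rightarrow> nat \<Rightarrow> nat \<Rightarrow> real" where
  "alg_iter A m n eps ts 0 = x_init A m n eps"
| "alg_iter A m n eps ts (Suc k) =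
     (let x = alg_iter A m n eps ts k in
      (\<lambda>i. x i * exp (- alpha m n eps * xi_t A m n eps (ts k) x i)))"

end

theory Submission
  imports Defs
begin


lemma exp_quad_bound:
  fixes z :: real assumes "\<bar>z\<bar> \<le> 1"
  shows "exp z \<le> 1 + z + z^2"
proof (cases "z \<ge> 0")
  case True thus ?thesis using exp_bound[of z] assms by auto
next
  case False
  define a where "a = -z"
  have a: "0 < a" "a \<le> 1" using False assms a_def by auto
  have e1: "1 + a \<le> exp a" by simp
  have e2: "exp z * exp a = 1" by (simp add: a_def flip: exp_add)
  have "exp z * (1 + a) \<le> exp z * exp a" using e1 by (intro mult_left_mono) auto
  hence h: "exp z * (1 + a) \<le> 1" using e2 by simp
  have "1 \<le> (1 - a + a^2) * (1 + a)" using a by (simp add: algebra_simps power2_eq_square power3_eq_cube)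
  hence "exp z * (1 + a) \<le> (1 - a + a^2) * (1 + a)" using h by linarith
  hence "exp z \<le> 1 - a + a^2" using a by (simp add: mult_le_cancel_right)
  thus ?thesis by (simp add: a_def)
qed

lemma s_cases_lemma:
  fixes A :: "nat \<Rightarrow> nat \<Rightarrow> real"
  assumes "-1 \<le> gradf A m n eps x i"
  shows "xi_t A m n eps t x i = 0 \<or> (eps * 2^t < \<bar>xi_t A m n eps t x i\<bar> \<and> \<bar>xi_t A m n eps t x i\<bar> \<le> 2*(eps*2^t)
     \<and> eps < \<bar>gradf A m n eps x i\<bar> \<and> ((gradf A m n eps x i > 1 \<and> xi_t A m n eps t x i = 1)
       \<or> (\<bar>gradf A m n eps x i\<bar> \<le> 1 \<and> xi_t A m n eps t x i = gradf A m n eps x i)))"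
  using assms unfolding xi_t_def xi_def Let_def by (auto split: if_splits simp: mult_ac)



lemma per_i:
  fixes xx gi si B C a :: real
  assumes xnn: "0 \<le> xx" and a: "0 < a" and C: "C = B/4" and B: "0 < B"
    and gge: "-1 \<le> gi"
    and sc: "si = 0 \<or> (B < \<bar>si\<bar> \<and> \<bar>si\<bar> \<le> 2*B \<and> eps < \<bar>gi\<bar> \<and> ((gi > 1 \<and> si = 1) \<or> (\<bar>gi\<bar> \<le> 1 \<and> si = gi)))"
  defines "di \<equiv> xx * exp (- a * si) - xx"
  shows "gi * di + C * \<bar>di\<bar> * (gi + 1) \<le> 0"
    and "\<bar>di\<bar> \<le> xx * (exp (2*a*B) - 1)"
proof -
  have e0: "\<bar>exp (- a * si) - 1\<bar> \<le> exp (2*a*B) - 1"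
  proof (cases "si = 0")
    case True thus ?thesis using a B by simp
  next
    case False
    hence sb: "\<bar>si\<bar> \<le> 2*B" using sc by auto
    have m: "exp (a*\<bar>si\<bar>) \<le> exp (2*a*B)" using sb a by (simp add: mult_left_mono)
    show ?thesis
    proof (cases "si \<ge> 0")
      case True
      have h1: "1 - a*si \<le> exp (-a*si)" using exp_ge_add_one_self[of "-a*si"] by simp
      have h2: "exp (-a*si) \<le> 1" using True a by simp
      have h3: "a*si \<le> 2*a*B" using sb True a by (simp add: mult_left_mono)
      have h4: "1 + 2*a*B \<le> exp (2*a*B)" by (rule exp_ge_add_one_self)
      have "\<bar>exp (- a * si) - 1\<bar> = 1 - exp (-a*si)" using h2 by simp
      thus ?thesis using h1 h3 h4 by linarith
    next
      case f: False
      have "exp (-a*si) \<ge> 1" using f a by (simp add: mult_pos_neg less_imp_le)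
      thus ?thesis using m f by (simp add: abs_if)
    qed
  qed
  have di': "di = xx * (exp (- a * si) - 1)" by (simp add: di_def algebra_simps)
  show "\<bar>di\<bar> \<le> xx * (exp (2*a*B) - 1)"
    using e0 xnn by (simp add: di' abs_mult mult_left_mono)
  show "gi * di + C * \<bar>di\<bar> * (gi + 1) \<le> 0"
  proof (cases "si = 0")
    case True thus ?thesis by (simp add: di')
  next
    case False
    hence sc': "B < \<bar>si\<bar> \<and> eps < \<bar>gi\<bar> \<and> ((gi > 1 \<and> si = 1) \<or> (\<bar>gi\<bar> \<le> 1 \<and> si = gi))" using sc by auto
    show ?thesis
    proof (cases "si > 0")
      case True
      have "exp (-a*si) \<le> 1" using True a by simp
      hence dle: "di \<le> 0" using xnn by (simp add: di' mult_nonneg_nonpos)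
      have "C * (gi + 1) \<le> gi"
      proof -
        have Cp: "0 < C" using C B by simp
        from sc' True consider "gi > 1" "si = 1" | "\<bar>gi\<bar> \<le> 1" "si = gi" by force
        thus ?thesis
        proof cases
          case 1
          have "C < 1/4" using sc' 1 C by simp
          hence "C * (gi + 1) \<le> (1/4) * (gi+1)" using 1 by (intro mult_right_mono) auto
          moreover have "(1/4) * (gi+1) \<le> gi" using 1 by simp
          ultimately show ?thesis by linarith
        next
          case 2
          have "B < gi" using sc' 2 True by simp
          have "C * (gi + 1) \<le> C * 2" using 2 Cp by (intro mult_left_mono) auto
          thus ?thesis using \<open>B < gi\<close> C B by linarith
        qed
      qed
      hence "0 \<le> gi - C * (gi + 1)" by simp
      hence "di * (gi - C*(gi+1)) \<le> 0" using dle by (simp add: mult_nonpos_nonneg)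
      thus ?thesis using dle by (simp add: algebra_simps)
    next
      case f: False
      hence neg: "si < 0" using False by simp
      have "exp (-a*si) \<ge> 1" using neg a by (simp add: mult_pos_neg less_imp_le)
      hence dge: "di \<ge> 0" using xnn by (simp add: di')
      have gs: "gi = si" "gi < 0" "-gi \<le> 1" "B < -gi" using sc' neg by auto
      have "C * (gi + 1) \<le> C" using gs C B by (simp add: mult_left_le)
      hence "gi + C * (gi + 1) \<le> 0" using gs C B by linarith
      hence "di * (gi + C*(gi+1)) \<le> 0" using dge by (simp add: mult_nonneg_nonpos)
      thus ?thesis using dge by (simp add: algebra_simps)
    qed
  qed
qed



lemma fmu_cong:
  assumes "\<forall>i<n. x' i = x i"
  shows "fmu A m n eps x' = fmu A m n eps x"
  using assms by (simp add: fmu_def pj_def Ax_def)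

lemma descent:
  fixes A :: "nat \<Rightarrow> nat \<Rightarrow> real" and x :: "nat \<Rightarrow> real"
  assumes nonneg: "\<forall>j<m. \<forall>i<n. 0 \<le> A j i"
    and xnn: "\<forall>i<n. 0 \<le> x i"
    and Axb: "\<forall>j<m. Ax A n x j \<le> 1 + eps"
    and eps: "0 < eps" "eps \<le> 1/2"
    and mupos: "0 < mu m n eps" "mu m n eps \<le> 1/4"
  shows "fmu A m n eps (\<lambda>i. x i * exp (- alpha m n eps * xi_t A m n eps t x i)) \<le> fmu A m n eps x"
proof -
  define u where "u = mu m n eps"
  define a where "a = alpha m n eps"
  define B where "B = eps * 2 ^ t"
  define s where "s = xi_t A m n eps t x"
  define g where "g = gradf A m n eps x"
  define x' where "x' = (\<lambda>i. x i * exp (- a * s i))"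
  define d where "d = (\<lambda>i. x i * exp (- a * s i) - x i)"
  define p where "p = pj A m n eps x"
  define D where "D = (\<lambda>j. \<Sum>i<n. A j i * d i)"
  define C where "C = B / 4"
  have u: "0 < u" "u \<le> 1/4" using mupos u_def by auto
  have a_eq: "a = u / 20" by (simp add: a_def alpha_def u_def)
  have apos: "0 < a" using u a_eq by simp
  have Bpos: "0 < B" using eps by (simp add: B_def)
  have ppos: "\<And>j. 0 < p j" by (simp add: p_def pj_def)
  have g_eq: "\<And>i. g i = -1 + (\<Sum>j<m. A j i * p j)" by (simp add: g_def gradf_def p_def)
  have gge: "\<And>i. i < n \<Longrightarrow> -1 \<le> g i"
  proof -
    fix i assume i: "i < n"
    have "0 \<le> (\<Sum>j<m. A j i * p j)" using nonneg i ppos by (intro sum_nonneg) (simp add: less_imp_le)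
    thus "-1 \<le> g i" by (simp add: g_eq)
  qed
  have sc: "\<And>i. i < n \<Longrightarrow> s i = 0 \<or> (B < \<bar>s i\<bar> \<and> \<bar>s i\<bar> \<le> 2*B \<and> eps < \<bar>g i\<bar> \<and> ((g i > 1 \<and> s i = 1) \<or> (\<bar>g i\<bar> \<le> 1 \<and> s i = g i)))"
    unfolding s_def g_def B_def using gge g_def by (intro s_cases_lemma) auto
  have key: "\<And>i. i < n \<Longrightarrow> g i * d i + C * \<bar>d i\<bar> * (g i + 1) \<le> 0"
    unfolding d_def by (rule per_i(1)[OF _ apos C_def Bpos gge sc]) (use xnn in auto)
  have dabs: "\<And>i. i < n \<Longrightarrow> \<bar>d i\<bar> \<le> x i * (exp (2*a*B) - 1)"
    unfolding d_def by (rule per_i(2)[OF _ apos C_def Bpos gge sc]) (use xnn in auto)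
  have goal_eq: "(\<lambda>i. x i * exp (- alpha m n eps * xi_t A m n eps t x i)) = x'"
    by (simp add: x'_def a_def s_def)
  show ?thesis
  proof (cases "B < 1")
    case False
    have "\<forall>i<n. s i = 0" using sc False by fastforce
    hence "\<forall>i<n. x' i = x i" by (simp add: x'_def)
    thus ?thesis unfolding goal_eq by (rule fmu_cong[THEN eq_refl])
  next
    case True
    define E where "E = exp (2*a*B) - 1"
    define y where "y = 2*a*B"
    have Bu: "B * u \<le> u" using True u by (simp add: mult_right_le_one_le less_imp_le)
    have yeq: "y = B*u/10" by (simp add: y_def a_eq)
    have "0 \<le> B*u" using Bpos u by simp
    hence y: "0 \<le> y" "y \<le> 1/40" using Bu u yeq by linarith+
    have "E \<le> y + y^2" using exp_bound[of y] y by (simp add: E_def y_def)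
    also have "y^2 \<le> y * (1/40)" unfolding power2_eq_square using y by (intro mult_left_mono) auto
    finally have Ele: "E \<le> (41/40) * y" by simp
    have Enn: "0 \<le> E" using apos Bpos by (simp add: E_def)
    have Dabs: "\<And>j. j < m \<Longrightarrow> \<bar>D j\<bar> \<le> C * u"
    proof -
      fix j assume j: "j < m"
      have "\<bar>D j\<bar> \<le> (\<Sum>i<n. \<bar>A j i * d i\<bar>)" unfolding D_def by (rule sum_abs)
      also have "\<dots> \<le> (\<Sum>i<n. A j i * (x i * E))"
        using nonneg j dabs by (intro sum_mono) (simp add: abs_mult mult_left_mono E_def)
      also have "\<dots> = E * Ax A n x j" by (simp add: Ax_def sum_distrib_left mult_ac)
      also have "\<dots> \<le> E * (3/2)" using Axb j eps Enn by (intro mult_left_mono) auto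
      also have "\<dots> \<le> (41/40) * y * (3/2)" using Ele by simp
      also have "\<dots> \<le> C * u" unfolding y_def C_def a_eq using u Bpos by simp
      finally show "\<bar>D j\<bar> \<le> C * u" .
    qed
    have Cle: "C \<le> 1/4" using True C_def by simp
    have Cnn: "0 \<le> C" using Bpos C_def by simp
    have Ax': "\<And>j. Ax A n x' j = Ax A n x j + D j"
      unfolding Ax_def D_def x'_def d_def sum.distrib[symmetric] by (rule sum.cong) (simp_all add: algebra_simps)
    have pj': "\<And>j. pj A m n eps x' j = p j * exp (D j / u)"
      by (simp add: pj_def p_def Ax' u_def[symmetric] flip: exp_add) (simp add: diff_divide_distrib add_divide_distrib)
    have ploc: "\<And>j. j < m \<Longrightarrow> u * pj A m n eps x' j \<le> u * p j + p j * D j + C * (p j * \<bar>D j\<bar>)"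
    proof -
      fix j assume j: "j < m"
      have absq: "\<bar>D j / u\<bar> = \<bar>D j\<bar> / u" using u by (simp add: abs_divide)
      have z1: "\<bar>D j / u\<bar> \<le> C" unfolding absq using Dabs[OF j] u by (simp only: pos_divide_le_eq)
      hence z: "\<bar>D j / u\<bar> \<le> 1" using Cle by linarith
      have sq: "(D j / u)^2 \<le> C * (\<bar>D j\<bar> / u)"
      proof -
        have "(D j / u)^2 = \<bar>D j / u\<bar> * \<bar>D j / u\<bar>" by (simp add: power2_eq_square)
        also have "\<dots> \<le> C * \<bar>D j / u\<bar>" using z1 by (intro mult_right_mono) auto
        finally show ?thesis unfolding absq .
      qed
      have "exp (D j / u) \<le> 1 + D j / u + C * (\<bar>D j\<bar> / u)"
        using exp_quad_bound[OF z] sq by linarith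
      hence "u * p j * exp (D j / u) \<le> u * p j * (1 + D j / u + C * (\<bar>D j\<bar> / u))"
        using u ppos[of j] by (intro mult_left_mono) auto
      also have "\<dots> = u * p j + p j * D j + C * (p j * \<bar>D j\<bar>)" using u by (simp add: field_simps)
      finally show "u * pj A m n eps x' j \<le> u * p j + p j * D j + C * (p j * \<bar>D j\<bar>)"
        by (simp add: pj' mult_ac)
    qed
    have swap1: "(\<Sum>j<m. p j * D j) = (\<Sum>i<n. d i * (g i + 1))"
    proof -
      have "(\<Sum>j<m. p j * D j) = (\<Sum>j<m. \<Sum>i<n. d i * (A j i * p j))" by (simp add: D_def sum_distrib_left mult_ac)
      also have "\<dots> = (\<Sum>i<n. \<Sum>j<m. d i * (A j i * p j))" by (rule sum.swap)
      also have "\<dots> = (\<Sum>i<n. d i * (g i + 1))" by (simp add: g_eq sum_distrib_left)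
      finally show ?thesis .
    qed
    have swap2: "(\<Sum>j<m. p j * \<bar>D j\<bar>) \<le> (\<Sum>i<n. \<bar>d i\<bar> * (g i + 1))"
    proof -
      have "(\<Sum>j<m. p j * \<bar>D j\<bar>) \<le> (\<Sum>j<m. p j * (\<Sum>i<n. A j i * \<bar>d i\<bar>))"
      proof (intro sum_mono)
        fix j assume j: "j \<in> {..<m}"
        have "\<bar>D j\<bar> \<le> (\<Sum>i<n. \<bar>A j i * d i\<bar>)" unfolding D_def by (rule sum_abs)
        also have "\<dots> = (\<Sum>i<n. A j i * \<bar>d i\<bar>)" using nonneg j by (intro sum.cong) (auto simp: abs_mult)
        finally show "p j * \<bar>D j\<bar> \<le> p j * (\<Sum>i<n. A j i * \<bar>d i\<bar>)"
          using ppos[of j] by (intro mult_left_mono) auto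
      qed
      also have "\<dots> = (\<Sum>i<n. \<bar>d i\<bar> * (g i + 1))"
      proof -
        have "(\<Sum>j<m. p j * (\<Sum>i<n. A j i * \<bar>d i\<bar>)) = (\<Sum>j<m. \<Sum>i<n. \<bar>d i\<bar> * (A j i * p j))" by (simp add: sum_distrib_left mult_ac)
        also have "\<dots> = (\<Sum>i<n. \<Sum>j<m. \<bar>d i\<bar> * (A j i * p j))" by (rule sum.swap)
        also have "\<dots> = (\<Sum>i<n. \<bar>d i\<bar> * (g i + 1))" by (simp add: g_eq sum_distrib_left)
        finally show ?thesis .
      qed
      finally show ?thesis .
    qed
    have "u * (\<Sum>j<m. pj A m n eps x' j) \<le> (\<Sum>j<m. u * p j + p j * D j + C * (p j * \<bar>D j\<bar>))"
      unfolding sum_distrib_left by (rule sum_mono) (simp add: ploc)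
    also have "\<dots> = u * (\<Sum>j<m. p j) + (\<Sum>j<m. p j * D j) + C * (\<Sum>j<m. p j * \<bar>D j\<bar>)"
      by (simp add: sum.distrib sum_distrib_left)
    also have "\<dots> \<le> u * (\<Sum>j<m. p j) + (\<Sum>i<n. d i * (g i + 1)) + C * (\<Sum>i<n. \<bar>d i\<bar> * (g i + 1))"
      using swap1 swap2 Cnn by (simp add: mult_left_mono)
    finally have S: "u * (\<Sum>j<m. pj A m n eps x' j) \<le> u * (\<Sum>j<m. p j) + (\<Sum>i<n. d i * (g i + 1)) + C * (\<Sum>i<n. \<bar>d i\<bar> * (g i + 1))" .
    have sx': "(\<Sum>i<n. x' i) = (\<Sum>i<n. x i) + (\<Sum>i<n. d i)"
      by (simp add: x'_def d_def sum.distrib[symmetric])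
    have K: "(\<Sum>i<n. g i * d i + C * \<bar>d i\<bar> * (g i + 1)) \<le> 0"
      using key by (intro sum_nonpos) auto
    have "fmu A m n eps x' = - (\<Sum>i<n. x' i) + u * (\<Sum>j<m. pj A m n eps x' j)"
      by (simp add: fmu_def u_def)
    also have "\<dots> \<le> - (\<Sum>i<n. x i) + u * (\<Sum>j<m. p j) + ((\<Sum>i<n. d i * (g i + 1)) - (\<Sum>i<n. d i) + C * (\<Sum>i<n. \<bar>d i\<bar> * (g i + 1)))"
      using S sx' by linarith
    also have "(\<Sum>i<n. d i * (g i + 1)) - (\<Sum>i<n. d i) + C * (\<Sum>i<n. \<bar>d i\<bar> * (g i + 1))
        = (\<Sum>i<n. g i * d i + C * \<bar>d i\<bar> * (g i + 1))"
    proof -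
      have e: "\<And>i. g i * d i + C * \<bar>d i\<bar> * (g i + 1) = (d i * (g i + 1) - d i) + C * (\<bar>d i\<bar> * (g i + 1))"
        by (simp add: algebra_simps)
      show ?thesis by (simp only: e sum.distrib sum_subtractf sum_distrib_left)
    qed
    also have "- (\<Sum>i<n. x i) + u * (\<Sum>j<m. p j) + (\<Sum>i<n. g i * d i + C * \<bar>d i\<bar> * (g i + 1)) \<le> fmu A m n eps x"
      using K by (simp add: fmu_def u_def p_def)
    finally show ?thesis unfolding goal_eq .
  qed
qed



lemma big:
  fixes nn mm eps s y L u :: real
  assumes nn: "1 \<le> nn" and mm: "1 \<le> mm" and eps: "0 < eps" "eps \<le> 1/2" and s: "0 < s"
    and y: "y = nn * mm / eps" and L: "L = ln y" and u: "u = eps / (4 * L)"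
  shows "nn * (1 + eps + s) < u * exp ((eps + s) / u)"
proof -
  have nm1: "1 \<le> nn * mm" using nn mm by (metis mult_mono' mult_1 zero_le_one order_trans)
  have "2 \<le> 1 / eps" using eps by (simp add: field_simps)
  also have "1/eps \<le> nn * mm / eps" using nm1 eps by (simp add: divide_right_mono)
  finally have y2: "2 \<le> y" using y by simp
  have ypos: "0 < y" using y2 by simp
  have Lpos: "0 < L" using L y2 by simp
  have Lle: "L \<le> y - 1" using L ln_le_minus_one ypos by simp
  have upos: "0 < u" using u eps Lpos by simp
  have eu: "eps / u = 4 * L" using u eps Lpos upos by simp
  have e4: "exp (4 * L) = y ^ 4" using exp_of_nat_mult[of 4 L] L ypos by simp
  have "exp ((eps + s) / u) = exp (eps / u) * exp (s / u)" by (simp add: add_divide_distrib exp_add)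
  also have "\<dots> = y^4 * exp (s / u)" using eu e4 by simp
  finally have ex: "exp ((eps + s) / u) = y^4 * exp (s / u)" .
  have "y^4 * (1 + s / u) \<le> y^4 * exp (s / u)" using ypos by (intro mult_left_mono) auto
  hence "u * (y^4 * (1 + s / u)) \<le> u * exp ((eps + s) / u)" using upos ex by (simp add: mult_left_mono)
  moreover have "u * (y^4 * (1 + s / u)) = u * y^4 + y^4 * s" using upos by (simp add: field_simps)
  ultimately have main: "u * y^4 + y^4 * s \<le> u * exp ((eps + s) / u)" by simp
  have yn: "nn \<le> y"
  proof -
    have "mm / eps \<ge> 1" using mm eps by (simp add: field_simps)
    hence "nn * 1 \<le> nn * (mm / eps)" using nn by (intro mult_left_mono) auto
    thus ?thesis using y by simp
  qed
  have y4: "y \<le> y^4"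
  proof -
    have "y^1 \<le> y^4" using y2 by (intro power_increasing) auto
    thus ?thesis by simp
  qed
  have part2: "nn * s \<le> y^4 * s" using yn y4 s by (intro mult_right_mono) auto
  have cub: "6 * (y - 1) < y^3"
  proof -
    have "y^3 - 6*y + 6 = (y - 2) * (y^2 + 2*y - 2) + 2" by (simp add: algebra_simps power2_eq_square power3_eq_cube)
    moreover have "0 \<le> y^2" by simp
    hence "0 \<le> (y - 2) * (y^2 + 2*y - 2)" using y2 by (intro mult_nonneg_nonneg) linarith+
    ultimately show ?thesis by simp
  qed
  have ey: "eps * y = nn * mm" using y eps by simp
  have uy: "u * y^4 = nn * mm * y^3 / (4 * L)"
  proof -
    have "u * y^4 = (eps * y) * y^3 / (4 * L)" by (simp add: u eval_nat_numeral field_simps)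
    thus ?thesis using ey by simp
  qed
  have q: "3/2 < y^3 / (4 * L)" using cub Lle Lpos by (simp add: field_simps)
  have "nn * (y^3 / (4 * L)) \<le> nn * mm * (y^3 / (4 * L))"
    using mm nn q by (intro mult_left_mono mult_right_mono) auto
  moreover have "nn * (3/2) < nn * (y^3 / (4 * L))" using q nn by (intro mult_strict_left_mono) auto
  moreover have "nn * (1 + eps) \<le> nn * (3/2)" using nn eps by simp
  ultimately have "nn * (1 + eps) < u * y^4" using uy by simp
  thus ?thesis using main part2 by (simp add: algebra_simps)
qed



lemma Ax_bound:
  fixes A :: "nat \<Rightarrow> nat \<Rightarrow> real" and x :: "nat \<Rightarrow> real"
  assumes nonneg: "\<forall>j<m. \<forall>i<n. 0 \<le> A j i"
    and col: "\<forall>i<n. \<exists>j<m. 1 \<le> A j i"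
    and m1: "1 \<le> m" and n1: "1 \<le> n" and eps: "0 < eps" "eps \<le> 1/2"
    and xnn: "\<forall>i<n. 0 \<le> x i"
    and f: "fmu A m n eps x \<le> 0"
    and mupos: "0 < mu m n eps"
  shows "\<forall>j<m. Ax A n x j \<le> 1 + eps"
proof (rule ccontr)
  assume neg: "\<not> (\<forall>j<m. Ax A n x j \<le> 1 + eps)"
  define u where "u = mu m n eps"
  define M where "M = Max (Ax A n x ` {..<m})"
  have fin: "finite (Ax A n x ` {..<m})" "Ax A n x ` {..<m} \<noteq> {}" using m1 by (auto simp: lessThan_empty_iff)
  obtain j0 where j0: "j0 < m" "Ax A n x j0 = M" using Max_in[OF fin] M_def by auto
  have Mge: "\<And>j. j < m \<Longrightarrow> Ax A n x j \<le> M" unfolding M_def using fin by (intro Max_ge) auto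
  have M: "1 + eps < M" using neg Mge by force
  have xM: "\<And>i. i < n \<Longrightarrow> x i \<le> M"
  proof -
    fix i assume i: "i < n"
    obtain j where j: "j < m" "1 \<le> A j i" using col i by auto
    have "x i \<le> A j i * x i" using j xnn i by (metis mult_right_mono mult_1)
    also have "A j i * x i \<le> Ax A n x j" unfolding Ax_def
      using nonneg xnn j i by (intro member_le_sum[of i "{..<n}" "\<lambda>i. A j i * x i"]) auto
    also have "\<dots> \<le> M" using Mge j by simp
    finally show "x i \<le> M" .
  qed
  have sx: "(\<Sum>i<n. x i) \<le> real n * M"
  proof -
    have "(\<Sum>i<n. x i) \<le> (\<Sum>i<n. M)" using xM by (intro sum_mono) auto
    thus ?thesis by simp
  qed
  have ppos: "\<And>j. 0 < pj A m n eps x j" by (simp add: pj_def)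
  have "pj A m n eps x j0 \<le> (\<Sum>j<m. pj A m n eps x j)"
    using j0 ppos by (intro member_le_sum) (auto simp: less_imp_le)
  hence "u * pj A m n eps x j0 \<le> u * (\<Sum>j<m. pj A m n eps x j)" using mupos u_def by simp
  also have "\<dots> \<le> (\<Sum>i<n. x i)" using f by (simp add: fmu_def u_def)
  finally have up: "u * pj A m n eps x j0 \<le> real n * M" using sx by simp
  have pe: "pj A m n eps x j0 = exp ((eps + (M - 1 - eps)) / u)"
    by (simp add: pj_def j0 u_def)
  have "real n * (1 + eps + (M - 1 - eps)) < u * exp ((eps + (M - 1 - eps)) / u)"
    by (rule big[where mm = "real m" and y = "real n * real m / eps" and L = "ln (real n * real m / eps)"])
       (use n1 m1 eps M in \<open>auto simp: u_def mu_def\<close>)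
  thus False using up pe by simp
qed



lemma mu_bounds:
  assumes m1: "1 \<le> m" and n1: "1 \<le> n" and eps: "0 < eps" "eps \<le> 1/2"
  shows "0 < mu m n eps" "mu m n eps \<le> 1/4" "2 * real n * real m \<le> real n * real m / eps"
    "mu m n eps = eps / (4 * ln (real n * real m / eps))"
proof -
  have nm1: "1 \<le> real n * real m" using mult_mono[of 1 "real n" 1 "real m"] m1 n1 by simp
  have "2 * (real n * real m) \<le> (1/eps) * (real n * real m)" using eps nm1 by (intro mult_right_mono) (auto simp: field_simps)
  thus y2: "2 * real n * real m \<le> real n * real m / eps" by simp
  define y where "y = real n * real m / eps"
  have yge: "2 \<le> y" using y2 nm1 y_def by simp
  have "exp (1/2::real) \<le> 1 + 1/2 + (1/2)^2" by (rule exp_bound) auto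
  also have "\<dots> \<le> y" using yge by (simp add: power2_eq_square)
  finally have L: "1/2 \<le> ln y" using yge by (subst ln_ge_iff) auto
  show "mu m n eps = eps / (4 * ln (real n * real m / eps))" by (simp add: mu_def)
  show "0 < mu m n eps" using L eps y_def by (simp add: mu_def)
  have "eps / (4 * ln y) \<le> (1/2) / (4 * (1/2))" using L eps by (intro frac_le) auto
  thus "mu m n eps \<le> 1/4" by (simp add: mu_def y_def)
qed

lemma f_init:
  fixes A :: "nat \<Rightarrow> nat \<Rightarrow> real"
  assumes nonneg: "\<forall>j<m. \<forall>i<n. 0 \<le> A j i"
    and colle: "\<forall>i<n. \<forall>j<m. A j i \<le> colnorm A m i"
    and colge: "\<forall>i<n. 1 \<le> colnorm A m i"
    and i0: "i0 < n" "colnorm A m i0 = 1"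
    and m1: "1 \<le> m" and n1: "1 \<le> n" and eps: "0 < eps" "eps \<le> 1/2"
  shows "fmu A m n eps (x_init A m n eps) \<le> 0"
proof -
  define u where "u = mu m n eps"
  define y where "y = real n * real m / eps"
  define L where "L = ln y"
  have mb: "0 < u" "u \<le> 1/4" "2 * real n * real m \<le> y" "u = eps / (4 * L)"
    using mu_bounds[OF m1 n1 eps] by (auto simp: u_def y_def L_def)
  have npos: "0 < real n" using n1 by simp
  have nm1: "1 \<le> real n * real m" using mult_mono[of 1 "real n" 1 "real m"] m1 n1 by simp
  have ypos: "0 < y" using mb nm1 by simp
  have Lpos: "0 < L" using mb eps by (simp add: divide_pos_pos zero_less_divide_iff)
  have Ax0: "\<And>j. j < m \<Longrightarrow> Ax A n (x_init A m n eps) j \<le> 1 - eps/2"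
  proof -
    fix j assume j: "j < m"
    have "Ax A n (x_init A m n eps) j \<le> (\<Sum>i<n. (1 - eps/2) / real n)"
      unfolding Ax_def
    proof (intro sum_mono)
      fix i assume i: "i \<in> {..<n}"
      have c: "1 \<le> colnorm A m i" "A j i \<le> colnorm A m i" "0 \<le> A j i" using colge colle nonneg i j by auto
      have "A j i * x_init A m n eps i = (A j i / colnorm A m i) * ((1 - eps/2) / real n)"
        by (simp add: x_init_def field_simps)
      also have "\<dots> \<le> 1 * ((1 - eps/2) / real n)"
        using c eps npos by (intro mult_right_mono) (auto simp: divide_le_eq)
      finally show "A j i * x_init A m n eps i \<le> (1 - eps/2) / real n" by simp
    qed
    also have "\<dots> = 1 - eps/2" using npos by simp
    finally show "Ax A n (x_init A m n eps) j \<le> 1 - eps/2" .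
  qed
  have pjb: "\<And>j. j < m \<Longrightarrow> pj A m n eps (x_init A m n eps) j \<le> exp (- (2 * L))"
  proof -
    fix j assume j: "j < m"
    have "(1 / u) * (Ax A n (x_init A m n eps) j - 1) \<le> (1 / u) * (- eps / 2)"
      using Ax0[OF j] mb(1) by (intro mult_left_mono) auto
    also have "\<dots> = - (2 * L)" using mb(4) eps Lpos by simp
    finally show "pj A m n eps (x_init A m n eps) j \<le> exp (- (2 * L))"
      by (simp add: pj_def u_def)
  qed
  have e2: "exp (- (2 * L)) = 1 / y^2"
    using exp_of_nat_mult[of 2 L] ypos by (simp add: L_def exp_minus divide_inverse power2_eq_square)
  have "(\<Sum>j<m. pj A m n eps (x_init A m n eps) j) \<le> (\<Sum>j<m. 1 / y^2)"
    using pjb e2 by (intro sum_mono) auto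
  also have "\<dots> = real m / y^2" by simp
  also have "\<dots> \<le> 1 / (4 * real n)"
  proof -
    have K: "(2 * real n * real m)^2 \<le> y^2" using mb npos by (intro power_mono) auto
    have "real m * (4 * real n) * 1 \<le> real m * (4 * real n) * (real n * real m)"
      using nm1 npos by (intro mult_left_mono) auto
    also have "\<dots> = (2 * real n * real m)^2" by (simp add: power2_eq_square algebra_simps)
    finally have "real m * (4 * real n) \<le> y^2" using K by simp
    thus ?thesis using npos ypos by (simp add: field_simps)
  qed
  finally have sp: "(\<Sum>j<m. pj A m n eps (x_init A m n eps) j) \<le> 1 / (4 * real n)" .
  have x0nn: "\<And>i. i < n \<Longrightarrow> 0 \<le> x_init A m n eps i"
    using colge eps by (auto simp: x_init_def intro!: divide_nonneg_pos)
  have "x_init A m n eps i0 \<le> (\<Sum>i<n. x_init A m n eps i)"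
    using i0 x0nn by (intro member_le_sum) auto
  moreover have "x_init A m n eps i0 = (1 - eps/2) / real n" using i0 by (simp add: x_init_def)
  moreover have "(3/4) / real n \<le> (1 - eps/2) / real n" using eps npos by (intro divide_right_mono) auto
  moreover have "u * (\<Sum>j<m. pj A m n eps (x_init A m n eps) j) \<le> (1/4) * (1 / (4 * real n))"
    using sp mb by (intro mult_mono) (auto intro: sum_nonneg simp: pj_def)
  moreover have "(1/4) * (1 / (4 * real n)) \<le> (3/4) / real n" using npos by (simp add: field_simps)
  ultimately have "u * (\<Sum>j<m. pj A m n eps (x_init A m n eps) j) \<le> (\<Sum>i<n. x_init A m n eps i)" by linarith
  thus ?thesis unfolding fmu_def u_def by linarith
qed



lemma opt_bound:
  fixes A :: "nat \<Rightarrow> nat \<Rightarrow> real" and x :: "nat \<Rightarrow> real"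
  assumes nonneg: "\<forall>j<m. \<forall>i<n. 0 \<le> A j i"
    and col: "\<forall>i<n. \<exists>j<m. 1 \<le> A j i"
    and xnn: "\<forall>i<n. 0 \<le> x i"
    and Axb: "\<forall>j<m. Ax A n x j \<le> 1 + eps"
    and eps: "0 < eps"
  shows "(\<Sum>i<n. x i) \<le> (1 + eps) * OPT A m n"
proof -
  define S where "S = {(\<Sum>i<n. w i) | w. feasible A m n w}"
  have bdd: "bdd_above S"
  proof (rule bdd_aboveI)
    fix v assume "v \<in> S"
    then obtain w where v: "v = (\<Sum>i<n. w i)" and fw: "feasible A m n w" by (auto simp: S_def)
    have "\<And>i. i < n \<Longrightarrow> w i \<le> 1"
    proof -
      fix i assume i: "i < n"
      obtain j where j: "j < m" "1 \<le> A j i" using col i by auto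
      have wnn: "\<forall>i<n. 0 \<le> w i" using fw by (simp add: feasible_def)
      have "w i \<le> A j i * w i" using j wnn i by (metis mult_right_mono mult_1)
      also have "A j i * w i \<le> Ax A n w j" unfolding Ax_def
        using nonneg wnn j i by (intro member_le_sum[of i "{..<n}" "\<lambda>i. A j i * w i"]) auto
      also have "\<dots> \<le> 1" using fw j by (simp add: feasible_def)
      finally show "w i \<le> 1" .
    qed
    hence "(\<Sum>i<n. w i) \<le> (\<Sum>i<n. 1)" by (intro sum_mono) auto
    thus "v \<le> real n" using v by simp
  qed
  define z where "z = (\<lambda>i. x i / (1 + eps))"
  have fz: "feasible A m n z"
    unfolding feasible_def
  proof (intro conjI allI impI)
    fix i assume "i < n" thus "0 \<le> z i" using xnn eps by (simp add: z_def)
  next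
    fix j assume j: "j < m"
    have "Ax A n z j = Ax A n x j / (1 + eps)" by (simp add: Ax_def z_def sum_divide_distrib)
    also have "\<dots> \<le> 1" using Axb j eps by simp
    finally show "Ax A n z j \<le> 1" .
  qed
  have "(\<Sum>i<n. z i) \<in> S" using fz by (auto simp: S_def)
  hence "(\<Sum>i<n. z i) \<le> OPT A m n" using bdd by (simp add: OPT_def S_def[symmetric] cSup_upper)
  moreover have "(\<Sum>i<n. z i) = (\<Sum>i<n. x i) / (1 + eps)" by (simp add: z_def sum_divide_distrib)
  ultimately show ?thesis using eps by (simp add: field_simps)
qed



theorem claim3p5:
  fixes A :: "nat \<Rightarrow> nat \<Rightarrow> real" and m n T :: nat and eps :: real
    and ts :: "nat \<Rightarrow> nat"
  assumes nonneg: "\<forall>j<m. \<forall>i<n. 0 \<le> A j i"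
    and nozero: "\<forall>i<n. \<exists>j<m. A j i \<noteq> 0"
    and normalized: "n \<ge> 1" "Min {colnorm A m i | i. i < n} = 1"
    and eps: "0 < eps" "eps \<le> 1/2"
    and choices: "\<forall>k<T. ts k < wbuckets eps"
  shows "(\<forall>k<T. fmu A m n eps (alg_iter A m n eps ts (Suc k)) \<le> fmu A m n eps (alg_iter A m n eps ts k))
       \<and> (\<forall>k\<le>T. fmu A m n eps (alg_iter A m n eps ts k) \<le> 0
              \<and> (\<forall>j<m. Ax A n (alg_iter A m n eps ts k) j \<le> 1 + eps)
              \<and> (\<Sum>i<n. alg_iter A m n eps ts k i) \<le> (1 + eps) * OPT A m n)"
proof -
  have m1: "1 \<le> m"
  proof -
    obtain j where "j < m" using nozero normalized(1) by auto
    thus ?thesis by simp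
  qed
  have n1: "1 \<le> n" using normalized(1) .
  have colmax: "\<And>i. i < n \<Longrightarrow> (\<exists>j<m. A j i = colnorm A m i) \<and> (\<forall>j<m. A j i \<le> colnorm A m i)"
  proof -
    fix i assume i: "i < n"
    have eq: "{\<bar>A j i\<bar> | j. j < m} = (\<lambda>j. \<bar>A j i\<bar>) ` {..<m}" by auto
    have fin: "finite {\<bar>A j i\<bar> | j. j < m}" "{\<bar>A j i\<bar> | j. j < m} \<noteq> {}" using m1 unfolding eq by (auto simp: lessThan_empty_iff)
    obtain j where j: "j < m" "colnorm A m i = \<bar>A j i\<bar>"
      using Max_in[OF fin] unfolding colnorm_def by auto
    have "\<forall>j<m. A j i \<le> colnorm A m i"
    proof (intro allI impI)
      fix jj assume jj: "jj < m"
      have "\<bar>A jj i\<bar> \<le> Max {\<bar>A j i\<bar> | j. j < m}" using fin jj by (intro Max_ge) auto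
      thus "A jj i \<le> colnorm A m i" unfolding colnorm_def by linarith
    qed
    thus "(\<exists>j<m. A j i = colnorm A m i) \<and> (\<forall>j<m. A j i \<le> colnorm A m i)"
      using j nonneg i by auto
  qed
  have ceq: "{colnorm A m i | i. i < n} = (\<lambda>i. colnorm A m i) ` {..<n}" by auto
  have cfin: "finite {colnorm A m i | i. i < n}" "{colnorm A m i | i. i < n} \<noteq> {}"
    using n1 unfolding ceq by (auto simp: lessThan_empty_iff)
  have colge: "\<forall>i<n. 1 \<le> colnorm A m i"
    using Min_le[OF cfin(1)] normalized(2) by auto
  obtain i0 where i0: "i0 < n" "colnorm A m i0 = 1"
    using Min_in[OF cfin] normalized(2) by auto
  have colle: "\<forall>i<n. \<forall>j<m. A j i \<le> colnorm A m i" using colmax by blast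
  have col: "\<forall>i<n. \<exists>j<m. 1 \<le> A j i" using colmax colge by force
  have mub: "0 < mu m n eps" "mu m n eps \<le> 1/4" using mu_bounds[OF m1 n1 eps] by auto
  let ?x = "alg_iter A m n eps ts"
  have step: "\<And>k. ?x (Suc k) = (\<lambda>i. ?x k i * exp (- alpha m n eps * xi_t A m n eps (ts k) (?x k) i))"
    by (simp add: Let_def)
  have inv: "\<And>k. (\<forall>i<n. 0 \<le> ?x k i) \<and> fmu A m n eps (?x k) \<le> 0"
  proof -
    fix k show "(\<forall>i<n. 0 \<le> ?x k i) \<and> fmu A m n eps (?x k) \<le> 0"
    proof (induction k)
      case 0
      have "\<forall>i<n. 0 \<le> ?x 0 i"
        using colge eps by (auto simp: x_init_def intro!: divide_nonneg_pos)
      moreover have "fmu A m n eps (?x 0) \<le> 0"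
        using f_init[OF nonneg colle colge i0 m1 n1 eps] by simp
      ultimately show ?case by simp
    next
      case (Suc k)
      have Axb: "\<forall>j<m. Ax A n (?x k) j \<le> 1 + eps"
        using Ax_bound[OF nonneg col m1 n1 eps _ _ mub(1)] Suc.IH by blast
      have "fmu A m n eps (?x (Suc k)) \<le> fmu A m n eps (?x k)"
        unfolding step using descent[OF nonneg _ Axb eps mub] Suc.IH by blast
      moreover have "\<forall>i<n. 0 \<le> ?x (Suc k) i" using Suc.IH unfolding step by simp
      ultimately show ?case using Suc.IH by simp
    qed
  qed
  have Axb: "\<And>k. \<forall>j<m. Ax A n (?x k) j \<le> 1 + eps"
    using Ax_bound[OF nonneg col m1 n1 eps _ _ mub(1)] inv by blast
  have desc: "\<And>k. fmu A m n eps (?x (Suc k)) \<le> fmu A m n eps (?x k)"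
    unfolding step using descent[OF nonneg _ Axb eps mub] inv by blast
  have opt: "\<And>k. (\<Sum>i<n. ?x k i) \<le> (1 + eps) * OPT A m n"
    using opt_bound[OF nonneg col _ Axb eps(1)] inv by blast
  show ?thesis using desc inv Axb opt by blast
qed

end
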